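(* Consider an instance of the cake-cutting problem with $k$ players (with hungry and closed preferences, as described in the context), and let $1\le p,q\le k$ be integers. (1) For any subset $S$ of $p$ players, there is a division of the cake into $k$ pieces such that, no matter which $\lceil\frac{k-p}{p}\rceil$ pieces are removed, there is an envy-free assignment of $p$ of the remaining pieces to the $p$ players of $S$: each player of $S$ receives a distinct remaining piece which is one of her preferred pieces in the division (so the players of $S$ envy neither each other nor the removed pieces). (2) There is a division of the cake into $q$ pieces such that, no matter which $\lceil\frac{k-q}{q}\rceil$ players leave, there is an envy-free assignment of the $q$ pieces to some $q$ of the remaining players: the $q$ pieces are given to $q$ distinct remaining players, each receiving one of her preferred pieces in the division.
   Context: The cake is the segment $[0,1]$. A division of the cake into $n$ pieces is a partition of $[0,1]$ into $n$ intervals (pieces, numbered from left to right, possibly of length zero); whether endpoints belong to an interval does not matter, so a division into $n$ pieces is identified with the vector of piece lengths, a point of the standard simplex in $\mathbb{R}^n$. For each division, each player has a nonempty set of preferred pieces (she may prefer several). Hungry assumption: in any division, each player prefers at least one piece of positive length. Closed preferences assumption: if a player prefers the $j$-th piece in each division of a converging sequence of divisions (into the same number of pieces), she also prefers the $j$-th piece in the limit division. An assignment of pieces to players is envy-free if each player receives a piece she prefers (weakly) to all other pieces of the division, i.e., one of her preferred pieces. *)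

theory Defs
  imports Complex_Main
begin

text \<open>A division of the cake [0,1] into n pieces, identified with the list of the
  lengths of the pieces (numbered 0..n-1 from left to right): a point of the
  standard simplex in R^n.\<close>
definition division :: "nat \<Rightarrow> real list \<Rightarrow> bool" where
  "division n x \<longleftrightarrow> length x = n \<and> (\<forall>a\<in>set x. 0 \<le> a) \<and> sum_list x = 1"

text \<open>Preferences of the players 0..k-1: pref i x is the set of (indices of) pieces
  that player i prefers in the division x (for divisions into any number of pieces).\<close>
definition cake_instance :: "nat \<Rightarrow> (nat \<Rightarrow> real list \<Rightarrow> nat set) \<Rightarrow> bool" where
  "cake_instance k pref \<longleftrightarrow>
     (\<forall>i<k. \<forall>n x. division n x \<longrightarrow> pref i x \<noteq> {} \<and> pref i x \<subseteq> {..<n}) \<and>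
     (\<forall>i<k. \<forall>n x. division n x \<longrightarrow> (\<exists>j\<in>pref i x. x ! j > 0)) \<and>
     (\<forall>i<k. \<forall>n X x j. (\<forall>m. division n (X m)) \<longrightarrow> division n x \<longrightarrow>
        (\<forall>l<n. (\<lambda>m. X m ! l) \<longlonglongrightarrow> x ! l) \<longrightarrow>
        (\<forall>m. j \<in> pref i (X m)) \<longrightarrow> j \<in> pref i x)"

end

theory Submission
  imports Defs "HOL-Analysis.Analysis"
begin

lemma hall:
  fixes A :: "'a set" and N :: "'a \<Rightarrow> 'b set"
  assumes "finite A" "\<forall>a\<in>A. finite (N a)"
    and "\<forall>T. T \<subseteq> A \<longrightarrow> card T \<le> card (\<Union>(N ` T))"
  shows "\<exists>f. inj_on f A \<and> (\<forall>a\<in>A. f a \<in> N a)"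
  using assms
proof (induction "card A" arbitrary: A N rule: less_induct)
  case less
  show ?case
  proof (cases "A = {}")
    case True then show ?thesis by auto
  next
    case False
    note fin = less.prems(1) and finN = less.prems(2) and H = less.prems(3)
    have finU: "\<And>T. T \<subseteq> A \<Longrightarrow> finite (\<Union>(N ` T))"
      using fin finN by (meson finite_UN_I finite_subset subsetD)
    show ?thesis
    proof (cases "\<exists>T. T \<noteq> {} \<and> T \<subset> A \<and> card T = card (\<Union>(N ` T))")
      case True
      then obtain T where T: "T \<noteq> {}" "T \<subset> A" "card T = card (\<Union>(N ` T))" by blast
      have cT: "card T < card A" using T(2) fin by (simp add: psubset_card_mono)
      have "\<exists>f. inj_on f T \<and> (\<forall>a\<in>T. f a \<in> N a)"
        apply (rule less.hyps[OF cT])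
        using T fin finN H by (auto intro: finite_subset)
      then obtain f1 where f1: "inj_on f1 T" "\<forall>a\<in>T. f1 a \<in> N a" by blast
      define NT where "NT = \<Union>(N ` T)"
      define N2 where "N2 = (\<lambda>a. N a - NT)"
      have cA: "card (A - T) < card A"
      proof -
        have fT: "finite T" using T(2) fin finite_subset by blast
        have "card T > 0" using T(1) fT by (simp add: card_gt_0_iff)
        moreover have "card (A - T) = card A - card T" using fT T(2) by (simp add: card_Diff_subset)
        moreover have "card T \<le> card A" using T(2) fin by (simp add: card_mono)
        ultimately show ?thesis by linarith
      qed
      have "\<exists>f. inj_on f (A - T) \<and> (\<forall>a\<in>A - T. f a \<in> N2 a)"
      proof (rule less.hyps[OF cA])
        show "finite (A - T)" using fin by auto
        show "\<forall>a\<in>A - T. finite (N2 a)" using finN by (auto simp: N2_def)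
        show "\<forall>U. U \<subseteq> A - T \<longrightarrow> card U \<le> card (\<Union> (N2 ` U))"
        proof (intro allI impI)
          fix U assume U: "U \<subseteq> A - T"
          have UT: "U \<union> T \<subseteq> A" using U T by auto
          have eq: "\<Union>(N ` (U \<union> T)) = \<Union> (N2 ` U) \<union> NT"
            by (auto simp: N2_def NT_def)
          have disj: "\<Union> (N2 ` U) \<inter> NT = {}" by (auto simp: N2_def)
          have fin2: "finite (\<Union> (N2 ` U))" using finU[of U] U by (auto simp: N2_def)
          have finNT: "finite NT" using finU[of T] T by (auto simp: NT_def)
          have "card U + card T = card (U \<union> T)"
            using U fin T UT by (subst card_Un_disjoint) (auto intro: finite_subset)
          also have "\<dots> \<le> card (\<Union>(N ` (U \<union> T)))" using H UT by blast
          also have "\<dots> = card (\<Union> (N2 ` U)) + card NT"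
            unfolding eq using disj fin2 finNT by (simp add: card_Un_disjoint)
          finally show "card U \<le> card (\<Union> (N2 ` U))" using T(3) by (simp add: NT_def)
        qed
      qed
      then obtain f2 where f2: "inj_on f2 (A - T)" "\<forall>a\<in>A - T. f2 a \<in> N2 a" by blast
      define f where "f = (\<lambda>a. if a \<in> T then f1 a else f2 a)"
      have "inj_on f A"
      proof (rule inj_onI)
        fix x y assume xy: "x \<in> A" "y \<in> A" "f x = f y"
        show "x = y"
        proof (cases "x \<in> T"; cases "y \<in> T")
          assume "x \<in> T" "y \<in> T" then show ?thesis using xy f1 by (auto simp: f_def inj_on_def)
        next
          assume "x \<notin> T" "y \<notin> T" then show ?thesis using xy f2 by (auto simp: f_def inj_on_def)
        next
          assume a: "x \<in> T" "y \<notin> T"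
          have "f x \<in> NT" using a f1 by (auto simp: f_def NT_def)
          moreover have "f y \<notin> NT" using a f2 xy(2) unfolding f_def N2_def by auto
          ultimately have "f x \<noteq> f y" by auto
          then show ?thesis using xy by simp
        next
          assume a: "x \<notin> T" "y \<in> T"
          have "f y \<in> NT" using a f1 by (auto simp: f_def NT_def)
          moreover have "f x \<notin> NT" using a f2 xy(1) unfolding f_def N2_def by auto
          ultimately have "f x \<noteq> f y" by auto
          then show ?thesis using xy by simp
        qed
      qed
      moreover have "\<forall>a\<in>A. f a \<in> N a" using f1 f2 by (auto simp: f_def N2_def)
      ultimately show ?thesis by blast
    next
      case False2: False
      obtain a where a: "a \<in> A" using False by blast
      have "1 \<le> card (N a)" using H[rule_format, of "{a}"] a by auto
      then obtain b where b: "b \<in> N a" by (metis card.empty ex_in_conv not_one_le_zero)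
      define A' where "A' = A - {a}"
      define N' where "N' = (\<lambda>x. N x - {b})"
      have cA: "card A' < card A" proof - have "card A > 0" using a fin card_gt_0_iff by blast then show ?thesis using a fin by (simp add: A'_def) qed
      have "\<exists>f. inj_on f A' \<and> (\<forall>x\<in>A'. f x \<in> N' x)"
      proof (rule less.hyps[OF cA])
        show "finite A'" using fin by (simp add: A'_def)
        show "\<forall>x\<in>A'. finite (N' x)" using finN by (auto simp: A'_def N'_def)
        show "\<forall>U. U \<subseteq> A' \<longrightarrow> card U \<le> card (\<Union> (N' ` U))"
        proof (intro allI impI)
          fix U assume U: "U \<subseteq> A'"
          show "card U \<le> card (\<Union> (N' ` U))"
          proof (cases "U = {}")
            case True then show ?thesis by simp
          next
            case False
            have UA: "U \<subset> A" using U a by (auto simp: A'_def)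
            have lt: "card U < card (\<Union>(N ` U))"
              using False2 False UA H by (metis le_neq_implies_less order_less_imp_le)
            have eq: "\<Union> (N' ` U) = \<Union>(N ` U) - {b}" by (auto simp: N'_def)
            have "card (\<Union>(N ` U)) - 1 \<le> card (\<Union>(N ` U) - {b})"
              using diff_card_le_card_Diff[of "{b}" "\<Union>(N ` U)"] by simp
            then show ?thesis using lt unfolding eq by linarith
          qed
        qed
      qed
      then obtain f' where f': "inj_on f' A'" "\<forall>x\<in>A'. f' x \<in> N' x" by blast
      define f where "f = f'(a := b)"
      have "inj_on f A"
      proof -
        have "inj_on f A'" using f' by (simp add: f_def A'_def inj_on_def)
        moreover have "f a \<notin> f ` A'" using f' by (auto simp: f_def A'_def N'_def)
        moreover have "A = insert a A'" using a by (auto simp: A'_def)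
        ultimately show ?thesis by auto
      qed
      moreover have "\<forall>x\<in>A. f x \<in> N x" using f' b by (auto simp: f_def A'_def N'_def)
      ultimately show ?thesis by blast
    qed
  qed
qed


definition nd :: "nat \<Rightarrow> (nat\<Rightarrow>real) \<Rightarrow> (nat\<Rightarrow>real) \<Rightarrow> real" where
  "nd n u v = (\<Sum>j<n. \<bar>u j - v j\<bar>)"
definition cube :: "nat \<Rightarrow> (nat\<Rightarrow>real) set" where
  "cube N = {x. \<forall>i<N. 0 \<le> x i \<and> x i \<le> 1}"
definition lip :: "(nat\<Rightarrow>real) set \<Rightarrow> nat \<Rightarrow> real \<Rightarrow> ((nat\<Rightarrow>real)\<Rightarrow>real) \<Rightarrow> bool" where
  "lip S n K f \<longleftrightarrow> (\<forall>u\<in>S. \<forall>v\<in>S. \<bar>f u - f v\<bar> \<le> K * nd n u v)"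

lemma nd_nonneg: "0 \<le> nd n u v" by (simp add: nd_def sum_nonneg)

lemma bw_finite:
  fixes X :: "nat \<Rightarrow> 'a \<Rightarrow> real"
  assumes "finite I" "\<forall>m. \<forall>i\<in>I. \<bar>X m i\<bar> \<le> B"
  shows "\<exists>r L. strict_mono r \<and> (\<forall>i\<in>I. (\<lambda>m. X (r m) i) \<longlonglongrightarrow> L i)"
  using assms
proof (induction I rule: finite_induct)
  case empty
  then show ?case by (auto intro: strict_mono_id[unfolded id_def])
next
  case (insert a I)
  then obtain r L where r: "strict_mono r" "\<forall>i\<in>I. (\<lambda>m. X (r m) i) \<longlonglongrightarrow> L i" by auto
  have "Bseq (\<lambda>m. X (r m) a)" using insert.prems by (intro BseqI'[of _ B]) auto
  then obtain s where s: "strict_mono s" "monoseq (\<lambda>m. X (r (s m)) a)"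
    using seq_monosub[of "\<lambda>m. X (r m) a"] by (auto simp: o_def)
  have "Bseq (\<lambda>m. X (r (s m)) a)" using insert.prems by (intro BseqI'[of _ B]) auto
  then have "convergent (\<lambda>m. X (r (s m)) a)" using s(2) Bseq_monoseq_convergent by blast
  then obtain la where la: "(\<lambda>m. X (r (s m)) a) \<longlonglongrightarrow> la" by (auto simp: convergent_def)
  have "strict_mono (r \<circ> s)" using r(1) s(1) by (simp add: strict_mono_o)
  moreover have "\<forall>i\<in>insert a I. (\<lambda>m. X ((r \<circ> s) m) i) \<longlonglongrightarrow> (L(a := la)) i"
  proof
    fix i assume "i \<in> insert a I"
    show "(\<lambda>m. X ((r \<circ> s) m) i) \<longlonglongrightarrow> (L(a := la)) i"
    proof (cases "i = a")
      case True then show ?thesis using la by simp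
    next
      case False
      then have "i \<in> I" using \<open>i \<in> insert a I\<close> by simp
      then have "(\<lambda>m. X (r m) i) \<longlonglongrightarrow> L i" using r(2) by blast
      from LIMSEQ_subseq_LIMSEQ[OF this s(1)] show ?thesis using False by (simp add: o_def)
    qed
  qed
  ultimately show ?case by blast
qed

lemma approx_fix:
  fixes f :: "(nat\<Rightarrow>real) \<Rightarrow> (nat\<Rightarrow>real)"
  assumes N: "0 < N" and into: "\<forall>x\<in>cube N. f x \<in> cube N"
    and L: "\<forall>i<N. lip (cube N) N K (\<lambda>x. f x i)" and K: "K \<ge> 0" and d: "\<delta> > 0"
  shows "\<exists>z\<in>cube N. \<forall>i<N. \<bar>f z i - z i\<bar> \<le> \<delta>"
proof -
  obtain p :: nat where p: "(K * N + 1) / \<delta> \<le> real p" using real_arch_simple by blast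
  have "(K * N + 1) / \<delta> > 0" using K d by (simp add: add_nonneg_pos)
  then have p0: "p > 0" using p by linarith
  have pd: "(K * N + 1) / p \<le> \<delta>"
    using p p0 d by (simp add: divide_le_eq mult.commute pos_divide_le_eq)
  define zz :: "(nat \<Rightarrow> nat) \<Rightarrow> (nat \<Rightarrow> real)" where "zz = (\<lambda>q j. real (q j) / real p)"
  have zzc: "zz q \<in> cube N" if "\<forall>i<N. q i \<le> p" for q
    using that p0 by (auto simp: zz_def cube_def divide_le_eq_1)
  define label :: "(nat \<Rightarrow> nat) \<Rightarrow> nat \<Rightarrow> nat" where
    "label = (\<lambda>q i. if q i = p then 1 else if zz q i \<le> f (zz q) i then 0 else 1)"
  have l1: "\<forall>x. (\<forall>i<N. x i \<le> p) \<longrightarrow> (\<forall>i<N. label x i = (0::nat) \<or> label x i = 1)"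
    by (auto simp: label_def)
  have l2: "\<forall>x. (\<forall>i<N. x i \<le> p) \<longrightarrow> (\<forall>i<N. x i = 0 \<longrightarrow> label x i = 0)"
  proof (intro allI impI)
    fix x :: "nat \<Rightarrow> nat" and i assume x: "\<forall>i<N. x i \<le> p" and i: "i < N" "x i = 0"
    have "f (zz x) \<in> cube N" using into zzc[OF x] by blast
    then have "0 \<le> f (zz x) i" using i by (auto simp: cube_def)
    then show "label x i = 0" using i p0 by (simp add: label_def zz_def)
  qed
  have l3: "\<forall>x. (\<forall>i<N. x i \<le> p) \<longrightarrow> (\<forall>i<N. x i = p \<longrightarrow> label x i = 1)"
    by (auto simp: label_def)
  obtain q where q1: "\<forall>i<N. q i < p"
    and q2: "\<forall>i<N. \<exists>r s. (\<forall>j<N. q j \<le> r j \<and> r j \<le> q j + 1) \<and> (\<forall>j<N. q j \<le> s j \<and> s j \<le> q j + 1) \<and> label r i \<noteq> label s i"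
    using kuhn_lemma[OF p0 l1 l2 l3] by blast
  define z where "z = zz q"
  have zc: "z \<in> cube N" unfolding z_def using q1 by (intro zzc) (auto intro: less_imp_le)
  have near: "nd N (zz r) z \<le> N / p" if "\<forall>j<N. q j \<le> r j \<and> r j \<le> q j + 1" for r
  proof -
    have "nd N (zz r) z \<le> (\<Sum>j<N. 1 / real p)"
      unfolding nd_def
    proof (rule sum_mono)
      fix j assume "j \<in> {..<N}"
      then have "q j \<le> r j" "r j \<le> q j + 1" using that by auto
      then have "\<bar>real (r j) - real (q j)\<bar> \<le> 1" by linarith
      then show "\<bar>zz r j - z j\<bar> \<le> 1 / real p"
        using p0 by (simp add: zz_def z_def diff_divide_distrib[symmetric] abs_divide divide_right_mono)
    qed
    then show ?thesis by simp
  qed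
  have rc: "zz r \<in> cube N" if "\<forall>j<N. q j \<le> r j \<and> r j \<le> q j + 1" for r
    using that q1 by (intro zzc) (metis Suc_eq_plus1 Suc_leI le_trans)
  have key: "\<bar>f z i - z i\<bar> \<le> (K * N + 1) / p"
    if i: "i < N" and r: "\<forall>j<N. q j \<le> r j \<and> r j \<le> q j + 1" and s: "\<forall>j<N. q j \<le> s j \<and> s j \<le> q j + 1"
      and lr: "label r i = 0" and ls: "label s i = 1" for i r s
  proof -
    have rr: "zz r i \<le> f (zz r) i" using lr by (auto simp: label_def split: if_splits)
    have fs: "f (zz s) \<in> cube N" using into rc[OF s] by blast
    have ss: "f (zz s) i \<le> zz s i"
    proof (cases "s i = p")
      case True then show ?thesis using fs i p0 by (auto simp: cube_def zz_def)
    next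
      case False then show ?thesis using ls by (auto simp: label_def split: if_splits)
    qed
    have a1: "\<bar>f (zz r) i - f z i\<bar> \<le> K * (N / p)"
      using L i rc[OF r] zc near[OF r] K unfolding lip_def
      by (meson mult_left_mono order_trans)
    have a2: "\<bar>f (zz s) i - f z i\<bar> \<le> K * (N / p)"
      using L i rc[OF s] zc near[OF s] K unfolding lip_def
      by (meson mult_left_mono order_trans)
    have b1: "z i \<le> zz r i" using r i p0 by (simp add: z_def zz_def divide_right_mono)
    have b2: "zz s i \<le> z i + 1 / p"
    proof -
      have "s i \<le> q i + 1" using s i by blast
      then have "real (s i) \<le> real (q i) + 1" by linarith
      then show ?thesis using p0 by (simp add: z_def zz_def add_divide_distrib[symmetric] divide_right_mono)
    qed
    have "K * (N / p) + 1 / p = (K * N + 1) / p" by (simp add: add_divide_distrib)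
    moreover have "f z i \<ge> f (zz r) i - K * (N / p)" "f z i \<le> f (zz s) i + K * (N / p)"
      using a1 a2 by (auto simp: abs_le_iff)
    moreover have "1 / real p \<ge> 0" by simp
    ultimately show ?thesis using b1 b2 rr ss by (simp only: abs_le_iff) linarith
  qed
  have "\<forall>i<N. \<bar>f z i - z i\<bar> \<le> \<delta>"
  proof (intro allI impI)
    fix i assume i: "i < N"
    obtain r s where r: "\<forall>j<N. q j \<le> r j \<and> r j \<le> q j + 1" and s: "\<forall>j<N. q j \<le> s j \<and> s j \<le> q j + 1"
      and ne: "label r i \<noteq> label s i" using q2 i by blast
    have lv: "label r i = 0 \<or> label r i = 1" "label s i = 0 \<or> label s i = 1" by (auto simp: label_def)
    have "\<bar>f z i - z i\<bar> \<le> (K * N + 1) / p"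
      using lv ne key[OF i r s] key[OF i s r] by auto
    then show "\<bar>f z i - z i\<bar> \<le> \<delta>" using pd by linarith
  qed
  then show ?thesis using zc by blast
qed

lemma tendsto_nd:
  assumes "\<forall>j<N. (\<lambda>m. Z m j) \<longlonglongrightarrow> z j"
  shows "(\<lambda>m. nd N z (Z m)) \<longlonglongrightarrow> 0"
proof -
  have "(\<lambda>m. \<Sum>j<N. \<bar>z j - Z m j\<bar>) \<longlonglongrightarrow> (\<Sum>j<N. \<bar>z j - z j\<bar>)"
    using assms by (intro tendsto_intros) auto
  then show ?thesis by (simp add: nd_def)
qed

lemma cube_fix:
  fixes f :: "(nat\<Rightarrow>real) \<Rightarrow> (nat\<Rightarrow>real)"
  assumes into: "\<forall>x\<in>cube N. f x \<in> cube N"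
    and L: "\<forall>i<N. lip (cube N) N K (\<lambda>x. f x i)" and K: "K \<ge> 0"
  shows "\<exists>z\<in>cube N. \<forall>i<N. f z i = z i"
proof (cases "N = 0")
  case True then show ?thesis by (auto simp: cube_def)
next
  case False
  then have N: "0 < N" by simp
  have "\<forall>m. \<exists>z. z \<in> cube N \<and> (\<forall>i<N. \<bar>f z i - z i\<bar> \<le> inverse (real (Suc m)))"
  proof
    fix m
    have "inverse (real (Suc m)) > 0" by simp
    from approx_fix[OF N into L K this] show "\<exists>z. z \<in> cube N \<and> (\<forall>i<N. \<bar>f z i - z i\<bar> \<le> inverse (real (Suc m)))" by blast
  qed
  from choice[OF this] obtain Z where Z0: "\<forall>m. Z m \<in> cube N \<and> (\<forall>i<N. \<bar>f (Z m) i - Z m i\<bar> \<le> inverse (real (Suc m)))"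
    by blast
  have Z: "\<And>m. Z m \<in> cube N" "\<And>m i. i < N \<Longrightarrow> \<bar>f (Z m) i - Z m i\<bar> \<le> inverse (real (Suc m))"
    using Z0 by auto
  have "\<forall>m. \<forall>i\<in>{..<N}. \<bar>Z m i\<bar> \<le> 1" using Z(1) by (auto simp: cube_def)
  then obtain r z where r: "strict_mono r" "\<forall>i\<in>{..<N}. (\<lambda>m. Z (r m) i) \<longlonglongrightarrow> z i"
    using bw_finite[of "{..<N}" Z 1] by blast
  have zc: "z \<in> cube N"
    unfolding cube_def
  proof (intro CollectI allI impI conjI)
    fix i assume i: "i < N"
    have lim: "(\<lambda>m. Z (r m) i) \<longlonglongrightarrow> z i" using r(2) i by blast
    show "0 \<le> z i" by (rule LIMSEQ_le_const[OF lim]) (use Z(1) i in \<open>auto simp: cube_def\<close>)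
    show "z i \<le> 1" by (rule LIMSEQ_le_const2[OF lim]) (use Z(1) i in \<open>auto simp: cube_def\<close>)
  qed
  have "\<forall>i<N. f z i = z i"
  proof (intro allI impI)
    fix i assume i: "i < N"
    have lim: "(\<lambda>m. Z (r m) i) \<longlonglongrightarrow> z i" using r(2) i by blast
    define g where "g = (\<lambda>m. K * nd N z (Z (r m)) + inverse (real (Suc (r m))) + \<bar>Z (r m) i - z i\<bar>)"
    have "(\<lambda>m. nd N z (Z (r m))) \<longlonglongrightarrow> 0" using r(2) by (intro tendsto_nd) auto
    moreover have "(\<lambda>m. inverse (real (Suc (r m)))) \<longlonglongrightarrow> 0"
      using LIMSEQ_subseq_LIMSEQ[OF LIMSEQ_inverse_real_of_nat r(1)] by (simp add: o_def)
    moreover have "(\<lambda>m. \<bar>Z (r m) i - z i\<bar>) \<longlonglongrightarrow> 0"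
      using lim by (metis LIM_zero tendsto_rabs_zero)
    ultimately have "(\<lambda>m. K * nd N z (Z (r m)) + inverse (real (Suc (r m))) + \<bar>Z (r m) i - z i\<bar>) \<longlonglongrightarrow> K * 0 + 0 + 0"
      by (intro tendsto_intros)
    then have g0: "g \<longlonglongrightarrow> 0" unfolding g_def by simp
    have "\<forall>m. \<bar>f z i - z i\<bar> \<le> g m"
    proof
      fix m
      have a: "\<bar>f z i - f (Z (r m)) i\<bar> \<le> K * nd N z (Z (r m))"
        using L i zc Z(1) unfolding lip_def by blast
      have b: "\<bar>f (Z (r m)) i - Z (r m) i\<bar> \<le> inverse (real (Suc (r m)))" using Z(2) i by blast
      show "\<bar>f z i - z i\<bar> \<le> g m" unfolding g_def using a b by linarith
    qed
    then have "\<bar>f z i - z i\<bar> \<le> 0" by (intro LIMSEQ_le_const[OF g0]) auto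
    then show "f z i = z i" by simp
  qed
  then show ?thesis using zc by blast
qed


definition smp :: "nat \<Rightarrow> (nat\<Rightarrow>real) set" where
  "smp n = {v. (\<forall>j<n. 0 \<le> v j) \<and> (\<Sum>j<n. v j) = 1}"

primrec Mx :: "(nat\<Rightarrow>real) \<Rightarrow> nat \<Rightarrow> real" where
  "Mx u 0 = u 0"
| "Mx u (Suc i) = max (Mx u i) (u (Suc i))"

definition Tc :: "nat \<Rightarrow> (nat\<Rightarrow>real) \<Rightarrow> nat \<Rightarrow> real" where
  "Tc n u i = (if n \<le> Suc i then 1 else Mx u i)"

definition Dv :: "nat \<Rightarrow> (nat\<Rightarrow>real) \<Rightarrow> nat \<Rightarrow> real" where
  "Dv n u j = (if j = 0 then Tc n u 0 else Tc n u j - Tc n u (j - 1))"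

definition cuts :: "(nat\<Rightarrow>real) \<Rightarrow> nat \<Rightarrow> real" where
  "cuts y i = (\<Sum>j\<le>i. y j)"

lemma max_lip: "\<bar>max a b - max c d\<bar> \<le> \<bar>a - c\<bar> + \<bar>b - (d::real)\<bar>"
  by (auto simp: max_def abs_if)

lemma Mx_mono: "Mx u i \<le> Mx u (Suc i)" by simp

lemma Mx_bounds: "u \<in> cube N \<Longrightarrow> i < N \<Longrightarrow> 0 \<le> Mx u i \<and> Mx u i \<le> 1"
  by (induction i) (auto simp: cube_def)

lemma Mx_lip: "\<bar>Mx u i - Mx w i\<bar> \<le> (\<Sum>j\<le>i. \<bar>u j - w j\<bar>)"
proof (induction i)
  case 0 then show ?case by simp
next
  case (Suc i)
  have "\<bar>max (Mx u i) (u (Suc i)) - max (Mx w i) (w (Suc i))\<bar> \<le> \<bar>Mx u i - Mx w i\<bar> + \<bar>u (Suc i) - w (Suc i)\<bar>"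
    by (rule max_lip)
  also have "\<dots> \<le> (\<Sum>j\<le>i. \<bar>u j - w j\<bar>) + \<bar>u (Suc i) - w (Suc i)\<bar>" using Suc by simp
  finally show ?case by simp
qed

lemma sum_le_nd: "i < N \<Longrightarrow> (\<Sum>j\<le>i. \<bar>u j - w j\<bar>) \<le> nd N u w"
  unfolding nd_def by (rule sum_mono2) auto

lemma Tc_lip: "\<bar>Tc n u i - Tc n w i\<bar> \<le> nd (n - 1) u w"
proof (cases "n \<le> Suc i")
  case True then show ?thesis by (simp add: Tc_def nd_nonneg)
next
  case False
  then have "\<bar>Tc n u i - Tc n w i\<bar> \<le> (\<Sum>j\<le>i. \<bar>u j - w j\<bar>)" using Mx_lip by (simp add: Tc_def)
  also have "\<dots> \<le> nd (n - 1) u w" using False by (intro sum_le_nd) auto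
  finally show ?thesis .
qed

lemma Dv_lip: "\<bar>Dv n u j - Dv n w j\<bar> \<le> 2 * nd (n - 1) u w"
  using Tc_lip[of n u j w] Tc_lip[of n u 0 w] Tc_lip[of n u "j - 1" w] nd_nonneg[of "n - 1" u w]
  by (auto simp: Dv_def abs_le_iff)

lemma Tc_mono: "u \<in> cube (n - 1) \<Longrightarrow> Tc n u j \<le> Tc n u (Suc j)"
  using Mx_bounds[of u "n - 1" j] by (auto simp: Tc_def)

lemma Tc_nonneg: "u \<in> cube (n - 1) \<Longrightarrow> 0 \<le> Tc n u 0"
  using Mx_bounds[of u "n - 1" 0] by (auto simp: Tc_def)

lemma cuts_Dv: "cuts (Dv n u) i = Tc n u i"
  by (induction i) (auto simp: cuts_def Dv_def)

lemma Dv_simplex: assumes "1 \<le> n" "u \<in> cube (n - 1)" shows "Dv n u \<in> smp n"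
proof -
  have "\<forall>j<n. 0 \<le> Dv n u j"
  proof (intro allI impI)
    fix j assume "j < n"
    show "0 \<le> Dv n u j"
    proof (cases j)
      case 0 then show ?thesis using Tc_nonneg[OF assms(2)] by (simp add: Dv_def)
    next
      case (Suc j') then show ?thesis using Tc_mono[OF assms(2), of j'] by (simp add: Dv_def)
    qed
  qed
  moreover have "(\<Sum>j<n. Dv n u j) = 1"
  proof -
    have "{..<n} = {..n - 1}" using assms(1) by auto
    then have "(\<Sum>j<n. Dv n u j) = cuts (Dv n u) (n - 1)" by (simp add: cuts_def)
    also have "\<dots> = 1" using assms(1) by (simp add: cuts_Dv Tc_def)
    finally show ?thesis .
  qed
  ultimately show ?thesis by (simp add: smp_def)
qed

lemma cuts_lip: "i < n \<Longrightarrow> \<bar>cuts y i - cuts y' i\<bar> \<le> nd n y y'"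
proof -
  assume i: "i < n"
  have "\<bar>cuts y i - cuts y' i\<bar> = \<bar>\<Sum>j\<le>i. y j - y' j\<bar>" by (simp add: cuts_def sum_subtractf)
  also have "\<dots> \<le> (\<Sum>j\<le>i. \<bar>y j - y' j\<bar>)" by (rule sum_abs)
  also have "\<dots> \<le> nd n y y'" using i by (rule sum_le_nd)
  finally show ?thesis .
qed

lemma cuts_eq: "\<forall>i<n. cuts a i = cuts b i \<Longrightarrow> j < n \<Longrightarrow> a j = b j"
proof (cases j)
  case 0
  assume "\<forall>i<n. cuts a i = cuts b i" "j < n"
  then show ?thesis using 0 by (auto simp: cuts_def)
next
  case (Suc j')
  assume h: "\<forall>i<n. cuts a i = cuts b i" "j < n"
  then have "cuts a (Suc j') = cuts b (Suc j')" "cuts a j' = cuts b j'" using Suc by auto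
  then show ?thesis using Suc by (simp add: cuts_def)
qed

lemma nd_le_sum: "nd n u v \<le> (\<Sum>j<n. \<bar>u j - v j\<bar>)" by (simp add: nd_def)

lemma simplex_fix:
  fixes G :: "(nat\<Rightarrow>real) \<Rightarrow> (nat\<Rightarrow>real)"
  assumes n: "1 \<le> n" and into: "\<forall>v\<in>smp n. G v \<in> smp n"
    and L: "\<forall>j<n. lip (smp n) n K (\<lambda>v. G v j)" and K: "K \<ge> 0"
  shows "\<exists>v\<in>smp n. \<forall>j<n. G v j = v j"
proof -
  define N where "N = n - 1"
  define H where "H = (\<lambda>u i. cuts (G (Dv n u)) i)"
  have Ds: "\<And>u. u \<in> cube N \<Longrightarrow> Dv n u \<in> smp n" using Dv_simplex n by (simp add: N_def)
  have Hc: "\<forall>u\<in>cube N. H u \<in> cube N"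
  proof
    fix u assume u: "u \<in> cube N"
    have y: "G (Dv n u) \<in> smp n" using into Ds[OF u] by blast
    show "H u \<in> cube N" unfolding cube_def
    proof (intro CollectI allI impI conjI)
      fix i assume i: "i < N"
      show "0 \<le> H u i" using y i by (auto simp: H_def cuts_def smp_def N_def intro!: sum_nonneg)
      have "H u i \<le> (\<Sum>j<n. G (Dv n u) j)" unfolding H_def cuts_def
        using y i by (intro sum_mono2) (auto simp: smp_def N_def)
      then show "H u i \<le> 1" using y by (simp add: smp_def)
    qed
  qed
  have HL: "\<forall>i<N. lip (cube N) N (2 * real n * real n * K) (\<lambda>u. H u i)"
  proof (intro allI impI)
    fix i assume i: "i < N"
    show "lip (cube N) N (2 * real n * real n * K) (\<lambda>u. H u i)" unfolding lip_def
    proof (intro ballI)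
      fix u w assume u: "u \<in> cube N" and w: "w \<in> cube N"
      have "\<bar>H u i - H w i\<bar> \<le> nd n (G (Dv n u)) (G (Dv n w))"
        unfolding H_def using i by (intro cuts_lip) (simp add: N_def)
      also have "\<dots> \<le> (\<Sum>j<n. K * nd n (Dv n u) (Dv n w))" unfolding nd_def
        by (rule sum_mono) (use L Ds[OF u] Ds[OF w] in \<open>auto simp: lip_def nd_def\<close>)
      also have "\<dots> = real n * K * nd n (Dv n u) (Dv n w)" by simp
      also have "nd n (Dv n u) (Dv n w) \<le> (\<Sum>j<n. 2 * nd N u w)" unfolding nd_def[of n "Dv n u" "Dv n w"]
        by (rule sum_mono) (use Dv_lip[of n u _ w] in \<open>simp add: N_def\<close>)
      then have "real n * K * nd n (Dv n u) (Dv n w) \<le> real n * K * (\<Sum>j<n. 2 * nd N u w)"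
        using K by (intro mult_left_mono) auto
      also have "\<dots> = 2 * real n * real n * K * nd N u w" by simp
      finally show "\<bar>H u i - H w i\<bar> \<le> 2 * real n * real n * K * nd N u w" by linarith
    qed
  qed
  obtain u where u: "u \<in> cube N" "\<forall>i<N. H u i = u i"
    using cube_fix[OF Hc HL] K by auto
  define y where "y = G (Dv n u)"
  have y: "y \<in> smp n" using into Ds[OF u(1)] by (simp add: y_def)
  have Mxu: "i < N \<Longrightarrow> Mx u i = u i" for i
  proof (induction i)
    case 0 then show ?case by simp
  next
    case (Suc i)
    have "u (Suc i) = cuts y (Suc i)" using u(2) Suc.prems by (simp add: H_def y_def)
    also have "\<dots> = cuts y i + y (Suc i)" by (simp add: cuts_def)
    also have "cuts y i = u i" using u(2) Suc.prems by (simp add: H_def y_def)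
    finally have "u i \<le> u (Suc i)" using y Suc.prems by (auto simp: smp_def N_def)
    then show ?case using Suc by simp
  qed
  have "\<forall>i<n. cuts y i = cuts (Dv n u) i"
  proof (intro allI impI)
    fix i assume i: "i < n"
    show "cuts y i = cuts (Dv n u) i"
    proof (cases "n \<le> Suc i")
      case True
      then have "i = n - 1" using i by simp
      then have "{..i} = {..<n}" using n by auto
      then have "cuts y i = 1" using y by (simp add: cuts_def smp_def)
      then show ?thesis using True by (simp add: cuts_Dv Tc_def)
    next
      case False
      then have iN: "i < N" by (simp add: N_def)
      then have "cuts y i = u i" using u(2) by (simp add: H_def y_def)
      then show ?thesis using False Mxu[OF iN] by (simp add: cuts_Dv Tc_def)
    qed
  qed
  then have "\<forall>j<n. G (Dv n u) j = Dv n u j" using cuts_eq unfolding y_def by blast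
  then show ?thesis using Ds[OF u(1)] by blast
qed


lemma lip_mono: "lip S n K f \<Longrightarrow> K \<le> K' \<Longrightarrow> lip S n K' f"
  unfolding lip_def by (meson mult_right_mono nd_nonneg order_trans)

lemma lip_const: "K \<ge> 0 \<Longrightarrow> lip S n K (\<lambda>v. c)"
  unfolding lip_def by (simp add: nd_nonneg)

lemma lip_coord: "j < n \<Longrightarrow> lip S n 1 (\<lambda>v. v j)"
  unfolding lip_def nd_def by (auto intro!: member_le_sum)

lemma lip_add: "lip S n K1 f \<Longrightarrow> lip S n K2 g \<Longrightarrow> lip S n (K1 + K2) (\<lambda>v. f v + g v)"
  unfolding lip_def
proof (intro ballI)
  fix u v assume a: "\<forall>u\<in>S. \<forall>v\<in>S. \<bar>f u - f v\<bar> \<le> K1 * nd n u v" "\<forall>u\<in>S. \<forall>v\<in>S. \<bar>g u - g v\<bar> \<le> K2 * nd n u v"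
    and uv: "u \<in> S" "v \<in> S"
  have "\<bar>f u - f v\<bar> \<le> K1 * nd n u v" "\<bar>g u - g v\<bar> \<le> K2 * nd n u v" using a uv by auto
  then show "\<bar>f u + g u - (f v + g v)\<bar> \<le> (K1 + K2) * nd n u v"
    by (simp add: distrib_right abs_le_iff)
qed

lemma lip_diff: "lip S n K1 f \<Longrightarrow> lip S n K2 g \<Longrightarrow> lip S n (K1 + K2) (\<lambda>v. f v - g v)"
  unfolding lip_def
proof (intro ballI)
  fix u v assume a: "\<forall>u\<in>S. \<forall>v\<in>S. \<bar>f u - f v\<bar> \<le> K1 * nd n u v" "\<forall>u\<in>S. \<forall>v\<in>S. \<bar>g u - g v\<bar> \<le> K2 * nd n u v"
    and uv: "u \<in> S" "v \<in> S"
  have "\<bar>f u - f v\<bar> \<le> K1 * nd n u v" "\<bar>g u - g v\<bar> \<le> K2 * nd n u v" using a uv by auto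
  then show "\<bar>f u - g u - (f v - g v)\<bar> \<le> (K1 + K2) * nd n u v"
    by (simp add: distrib_right abs_le_iff)
qed

lemma lip_scale: "lip S n K f \<Longrightarrow> lip S n (\<bar>c\<bar> * K) (\<lambda>v. c * f v)"
  unfolding lip_def by (simp add: abs_mult mult.assoc mult_left_mono right_diff_distrib[symmetric])

lemma lip_max0: "lip S n K f \<Longrightarrow> lip S n K (\<lambda>v. max 0 (f v))"
  unfolding lip_def
proof (intro ballI)
  fix u v assume a: "\<forall>u\<in>S. \<forall>v\<in>S. \<bar>f u - f v\<bar> \<le> K * nd n u v" and uv: "u \<in> S" "v \<in> S"
  have "\<bar>max 0 (f u) - max 0 (f v)\<bar> \<le> \<bar>f u - f v\<bar>" by (auto simp: max_def abs_if)
  moreover have "\<bar>f u - f v\<bar> \<le> K * nd n u v" using a uv by blast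
  ultimately show "\<bar>max 0 (f u) - max 0 (f v)\<bar> \<le> K * nd n u v" by linarith
qed

lemma lip_sum: "finite I \<Longrightarrow> (\<And>i. i \<in> I \<Longrightarrow> lip S n (K i) (f i)) \<Longrightarrow> lip S n (\<Sum>i\<in>I. K i) (\<lambda>v. \<Sum>i\<in>I. f i v)"
proof (induction I rule: finite_induct)
  case empty then show ?case by (simp add: lip_def nd_nonneg)
next
  case (insert a I)
  then have "lip S n (K a + (\<Sum>i\<in>I. K i)) (\<lambda>v. f a v + (\<Sum>i\<in>I. f i v))"
    by (intro lip_add) auto
  then show ?case using insert by simp
qed

lemma lip_mult:
  assumes "lip S n K1 f" "lip S n K2 g" "\<forall>v\<in>S. \<bar>f v\<bar> \<le> A" "\<forall>v\<in>S. \<bar>g v\<bar> \<le> B"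
  shows "lip S n (B * K1 + A * K2) (\<lambda>v. f v * g v)"
  unfolding lip_def
proof (intro ballI)
  fix u v assume u: "u \<in> S" and v: "v \<in> S"
  have "f u * g u - f v * g v = (f u - f v) * g u + f v * (g u - g v)" by (simp add: algebra_simps)
  then have "\<bar>f u * g u - f v * g v\<bar> \<le> \<bar>(f u - f v) * g u\<bar> + \<bar>f v * (g u - g v)\<bar>"
    by (metis abs_triangle_ineq)
  then have "\<bar>f u * g u - f v * g v\<bar> \<le> \<bar>f u - f v\<bar> * \<bar>g u\<bar> + \<bar>f v\<bar> * \<bar>g u - g v\<bar>"
    by (simp add: abs_mult)
  also have "\<dots> \<le> (K1 * nd n u v) * B + A * (K2 * nd n u v)"
  proof (rule add_mono)
    have a1: "\<bar>f u - f v\<bar> \<le> K1 * nd n u v" "\<bar>g u\<bar> \<le> B" using assms u v unfolding lip_def by auto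
    have "0 \<le> K1 * nd n u v" using a1(1) abs_ge_zero order_trans by blast
    then show "\<bar>f u - f v\<bar> * \<bar>g u\<bar> \<le> K1 * nd n u v * B"
      using a1 by (intro mult_mono) auto
    have a2: "\<bar>f v\<bar> \<le> A" "\<bar>g u - g v\<bar> \<le> K2 * nd n u v" using assms u v unfolding lip_def by auto
    have "0 \<le> A" using a2(1) abs_ge_zero order_trans by blast
    then show "\<bar>f v\<bar> * \<bar>g u - g v\<bar> \<le> A * (K2 * nd n u v)"
      using a2 by (intro mult_mono) auto
  qed
  finally show "\<bar>f u * g u - f v * g v\<bar> \<le> (B * K1 + A * K2) * nd n u v" by (simp add: algebra_simps)
qed

lemma lip_div:
  assumes "lip S n K1 f" "lip S n K2 g" "\<forall>v\<in>S. \<bar>f v\<bar> \<le> A" "\<forall>v\<in>S. g v \<ge> c" "c > 0"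
  shows "lip S n (K1 / c + A * K2 / c^2) (\<lambda>v. f v / g v)"
  unfolding lip_def
proof (intro ballI)
  fix u v assume u: "u \<in> S" and v: "v \<in> S"
  have gu: "g u \<ge> c" and gv: "g v \<ge> c" using assms u v by auto
  then have gpos: "g u > 0" "g v > 0" using assms(5) by auto
  have "f u / g u - f v / g v = (f u - f v) / g u + f v * (g v - g u) / (g u * g v)"
    using gpos by (simp add: field_simps)
  then have "\<bar>f u / g u - f v / g v\<bar> = \<bar>(f u - f v) / g u + f v * (g v - g u) / (g u * g v)\<bar>" by simp
  also have "\<dots> \<le> \<bar>(f u - f v) / g u\<bar> + \<bar>f v * (g v - g u) / (g u * g v)\<bar>" by (rule abs_triangle_ineq)
  also have "\<dots> = \<bar>f u - f v\<bar> / g u + \<bar>f v\<bar> * \<bar>g v - g u\<bar> / (g u * g v)"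
    using gpos by (simp add: abs_mult abs_divide)
  finally have "\<bar>f u / g u - f v / g v\<bar> \<le> \<bar>f u - f v\<bar> / g u + \<bar>f v\<bar> * \<bar>g v - g u\<bar> / (g u * g v)" .
  also have "\<dots> \<le> (K1 * nd n u v) / c + A * (K2 * nd n u v) / c^2"
  proof (rule add_mono)
    have "\<bar>f u - f v\<bar> \<le> K1 * nd n u v" using assms(1) u v by (auto simp: lip_def)
    then show "\<bar>f u - f v\<bar> / g u \<le> K1 * nd n u v / c"
      using gu assms(5) by (intro frac_le) (auto intro: order_trans[OF abs_ge_zero])
    have a: "\<bar>f v\<bar> * \<bar>g v - g u\<bar> \<le> A * (K2 * nd n u v)"
      using assms u v unfolding lip_def by (intro mult_mono) (auto simp: abs_minus_commute)
    have b: "c^2 \<le> g u * g v" using gu gv assms(5) by (simp add: power2_eq_square mult_mono')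
    have "0 < c^2" using assms(5) by simp
    show "\<bar>f v\<bar> * \<bar>g v - g u\<bar> / (g u * g v) \<le> A * (K2 * nd n u v) / c^2"
    proof (rule frac_le)
      show "0 \<le> A * (K2 * nd n u v)" using a by (meson abs_ge_zero mult_nonneg_nonneg order_trans)
    qed (use a b \<open>0 < c^2\<close> in auto)
  qed
  finally show "\<bar>f u / g u - f v / g v\<bar> \<le> (K1 / c + A * K2 / c^2) * nd n u v"
    by (simp add: algebra_simps)
qed

lemma smp_le1: "v \<in> smp n \<Longrightarrow> j < n \<Longrightarrow> 0 \<le> v j \<and> v j \<le> 1"
proof -
  assume v: "v \<in> smp n" and j: "j < n"
  have "v j \<le> (\<Sum>l<n. v l)" using v j by (intro member_le_sum) (auto simp: smp_def)
  then show ?thesis using v j by (auto simp: smp_def)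
qed

lemma hit_bary:
  fixes F :: "(nat\<Rightarrow>real) \<Rightarrow> (nat\<Rightarrow>real)"
  assumes n: "1 \<le> n" and into: "\<forall>v\<in>smp n. F v \<in> smp n"
    and L: "\<forall>j<n. lip (smp n) n K (\<lambda>v. F v j)" and K: "K \<ge> 0"
    and face: "\<forall>v\<in>smp n. \<forall>j<n. v j = 0 \<longrightarrow> F v j = 0"
  shows "\<exists>v\<in>smp n. \<forall>j<n. F v j = 1 / n"
proof -
  define b where "b = 1 / real n"
  have b: "b > 0" "real n * b = 1" using n by (auto simp: b_def)
  define s where "s = (\<lambda>v. \<Sum>l<n. max 0 (b - F v l))"
  define G where "G = (\<lambda>v j. (v j + max 0 (b - F v j)) / (1 + s v))"
  have s0: "s v \<ge> 0" for v by (simp add: s_def sum_nonneg)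
  have Gs: "\<forall>v\<in>smp n. G v \<in> smp n"
  proof
    fix v assume v: "v \<in> smp n"
    have "(\<Sum>j<n. G v j) = (\<Sum>j<n. v j + max 0 (b - F v j)) / (1 + s v)"
      by (simp add: G_def sum_divide_distrib)
    also have "\<dots> = 1" using v s0[of v] by (simp add: sum.distrib smp_def s_def)
    finally show "G v \<in> smp n" using v s0[of v] by (auto simp: smp_def G_def)
  qed
  have GL: "\<forall>j<n. lip (smp n) n ((1 + K) / 1 + (1 + b) * (real n * K) / 1^2) (\<lambda>v. G v j)"
  proof (intro allI impI)
    fix j assume j: "j < n"
    have Fl: "\<And>l. l < n \<Longrightarrow> lip (smp n) n (0 + K) (\<lambda>v. b - F v l)"
      using L by (intro lip_diff lip_const) auto
    have a: "lip (smp n) n (1 + K) (\<lambda>v. v j + max 0 (b - F v j))"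
      using j Fl[OF j] by (intro lip_add lip_coord lip_max0) auto
    have "lip (smp n) n (0 + (\<Sum>l<n. K)) (\<lambda>v. 1 + s v)" unfolding s_def
      using Fl by (intro lip_add lip_const lip_sum lip_max0) auto
    then have d: "lip (smp n) n (real n * K) (\<lambda>v. 1 + s v)" by simp
    have A: "\<forall>v\<in>smp n. \<bar>v j + max 0 (b - F v j)\<bar> \<le> 1 + b"
    proof
      fix v assume v: "v \<in> smp n"
      have "0 \<le> v j" "v j \<le> 1" using smp_le1[OF v j] by auto
      moreover have "0 \<le> F v j" using smp_le1[of "F v" n j] into v j by auto
      ultimately show "\<bar>v j + max 0 (b - F v j)\<bar> \<le> 1 + b" using b by auto
    qed
    have c: "\<forall>v\<in>smp n. 1 + s v \<ge> 1" using s0 by auto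
    show "lip (smp n) n ((1 + K) / 1 + (1 + b) * (real n * K) / 1^2) (\<lambda>v. G v j)"
      unfolding G_def by (rule lip_div[OF a d A c]) simp
  qed
  obtain v where v: "v \<in> smp n" "\<forall>j<n. G v j = v j"
    using simplex_fix[OF n Gs GL] K b by (auto simp: add_nonneg_nonneg)
  have eq: "v j * s v = max 0 (b - F v j)" if j: "j < n" for j
  proof -
    have "(v j + max 0 (b - F v j)) / (1 + s v) = v j" using v(2) j by (simp add: G_def)
    then have "v j + max 0 (b - F v j) = v j * (1 + s v)" using s0[of v]
      by (simp add: divide_eq_eq)
    then show ?thesis by (simp add: algebra_simps)
  qed
  have Fv: "F v \<in> smp n" using into v(1) by blast
  have s00: "s v = 0"
  proof (rule ccontr)
    assume "s v \<noteq> 0"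
    then have sp: "s v > 0" using s0[of v] by simp
    define J where "J = {j. j < n \<and> F v j < b}"
    have Jn: "J \<noteq> {}"
    proof
      assume "J = {}"
      then have "\<forall>l<n. max 0 (b - F v l) = 0" by (auto simp: J_def)
      then have "s v = 0" by (simp add: s_def)
      then show False using sp by simp
    qed
    have out: "F v j = 0" if "j < n" "j \<notin> J" for j
    proof -
      have "max 0 (b - F v j) = 0" using that by (auto simp: J_def)
      then have "v j = 0" using eq[OF that(1)] sp by simp
      then show ?thesis using face v(1) that(1) by blast
    qed
    have JS: "J \<subseteq> {..<n}" by (auto simp: J_def)
    have "(\<Sum>j<n. F v j) = (\<Sum>j\<in>J. F v j)"
      using out JS by (intro sum.mono_neutral_right) auto
    also have "\<dots> < (\<Sum>j\<in>J. b)"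
      using Jn JS by (intro sum_strict_mono) (auto simp: J_def intro: finite_subset)
    also have "\<dots> \<le> (\<Sum>j<n. b)" using JS b by (intro sum_mono2) auto
    also have "\<dots> = 1" using b by simp
    finally show False using Fv by (simp add: smp_def)
  qed
  have ge: "F v j \<ge> b" if "j < n" for j
    using eq[OF that] s00 by simp
  have "\<forall>j<n. F v j = b"
  proof (rule ccontr)
    assume "\<not> (\<forall>j<n. F v j = b)"
    then obtain j where j: "j < n" "F v j \<noteq> b" by blast
    then have "F v j > b" using ge by force
    then have "(\<Sum>l<n. b) < (\<Sum>l<n. F v l)"
      using j ge by (intro sum_strict_mono_ex1) auto
    then show False using Fv b by (simp add: smp_def)
  qed
  then show ?thesis using v(1) by (auto simp: b_def)
qed


definition Lst :: "nat \<Rightarrow> (nat\<Rightarrow>real) \<Rightarrow> real list" where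
  "Lst n v = map v [0..<n]"

lemma Lst_nth: "l < n \<Longrightarrow> Lst n v ! l = v l" by (simp add: Lst_def)

lemma division_Lst: "division n (Lst n v) \<longleftrightarrow> v \<in> smp n"
proof -
  have "sum_list (Lst n v) = (\<Sum>j<n. v j)"
    by (simp add: Lst_def sum_list_sum_nth atLeast0LessThan)
  moreover have "(\<forall>a\<in>set (Lst n v). 0 \<le> a) \<longleftrightarrow> (\<forall>j<n. 0 \<le> v j)" by (auto simp: Lst_def)
  ultimately show ?thesis by (simp add: division_def smp_def Lst_def)
qed

definition AA :: "(nat \<Rightarrow> real list \<Rightarrow> nat set) \<Rightarrow> nat \<Rightarrow> nat \<Rightarrow> nat \<Rightarrow> (nat\<Rightarrow>real) set" where
  "AA pref n i j = {v \<in> smp n. j \<in> pref i (Lst n v)}"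
definition dA :: "(nat \<Rightarrow> real list \<Rightarrow> nat set) \<Rightarrow> nat \<Rightarrow> nat \<Rightarrow> nat \<Rightarrow> (nat\<Rightarrow>real) \<Rightarrow> real" where
  "dA pref n i j v = (if AA pref n i j = {} then 1 else Inf ((\<lambda>y. nd n v y) ` AA pref n i j))"
definition phi :: "(nat \<Rightarrow> real list \<Rightarrow> nat set) \<Rightarrow> nat \<Rightarrow> nat \<Rightarrow> nat \<Rightarrow> nat \<Rightarrow> (nat\<Rightarrow>real) \<Rightarrow> real" where
  "phi pref n m i j v = max 0 (1 - real m * dA pref n i j v)"
definition hh :: "(nat \<Rightarrow> real list \<Rightarrow> nat set) \<Rightarrow> nat \<Rightarrow> nat \<Rightarrow> nat \<Rightarrow> nat \<Rightarrow> (nat\<Rightarrow>real) \<Rightarrow> real" where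
  "hh pref n m i j v = v j * phi pref n m i j v"
definition DD :: "(nat \<Rightarrow> real list \<Rightarrow> nat set) \<Rightarrow> nat \<Rightarrow> nat \<Rightarrow> nat \<Rightarrow> (nat\<Rightarrow>real) \<Rightarrow> real" where
  "DD pref n m i v = (\<Sum>j<n. hh pref n m i j v)"

lemma nd_triangle: "nd n u w \<le> nd n u v + nd n v w"
  unfolding nd_def by (simp add: sum.distrib[symmetric] sum_mono abs_triangle_ineq[of _ _, THEN order_trans] )

lemma nd_sym: "nd n u v = nd n v u"
  unfolding nd_def by (simp add: abs_minus_commute)

lemma nd_self: "nd n u u = 0" by (simp add: nd_def)

lemma dA_nonneg: "0 \<le> dA pref n i j v"
  unfolding dA_def by (auto intro!: cInf_greatest simp: nd_nonneg)

lemma dA_zero: "v \<in> AA pref n i j \<Longrightarrow> dA pref n i j v = 0"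
proof -
  assume v: "v \<in> AA pref n i j"
  have "Inf ((\<lambda>y. nd n v y) ` AA pref n i j) \<le> nd n v v"
    using v by (intro cInf_lower) (auto simp: bdd_below_def intro: nd_nonneg)
  moreover have "AA pref n i j \<noteq> {}" using v by blast
  ultimately have "dA pref n i j v \<le> 0" by (simp add: dA_def nd_self)
  then show ?thesis using dA_nonneg[of pref n i j v] by linarith
qed

lemma dA_lip1: "dA pref n i j v \<le> dA pref n i j w + nd n v w"
proof (cases "AA pref n i j = {}")
  case True then show ?thesis by (simp add: dA_def nd_nonneg)
next
  case False
  have "dA pref n i j v - nd n v w \<le> Inf ((\<lambda>y. nd n w y) ` AA pref n i j)"
  proof (rule cInf_greatest)
    show "(\<lambda>y. nd n w y) ` AA pref n i j \<noteq> {}" using False by simp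
    fix x assume "x \<in> (\<lambda>y. nd n w y) ` AA pref n i j"
    then obtain y where y: "y \<in> AA pref n i j" "x = nd n w y" by blast
    have "dA pref n i j v \<le> nd n v y" using False y(1) unfolding dA_def
      by (auto intro!: cInf_lower simp: bdd_below_def intro: nd_nonneg)
    also have "\<dots> \<le> nd n v w + nd n w y" by (rule nd_triangle)
    finally show "dA pref n i j v - nd n v w \<le> x" using y by simp
  qed
  then show ?thesis using False by (simp add: dA_def)
qed

lemma lip_dA: "lip S n 1 (dA pref n i j)"
  unfolding lip_def using dA_lip1[of pref n i j] nd_sym by (smt (verit, best))

lemma lip_phi: "lip S n (real m) (phi pref n m i j)"
proof -
  have "lip S n (0 + \<bar>real m\<bar> * 1) (\<lambda>v. 1 - real m * dA pref n i j v)"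
    by (intro lip_diff lip_const lip_scale lip_dA) simp
  then show ?thesis unfolding phi_def[abs_def] by (intro lip_max0) simp
qed

lemma phi_bounds: "0 \<le> phi pref n m i j v \<and> phi pref n m i j v \<le> 1"
  using dA_nonneg[of pref n i j v] by (simp add: phi_def mult_nonneg_nonneg)

lemma lip_hh: "j < n \<Longrightarrow> lip (smp n) n (1 + real m) (hh pref n m i j)"
proof -
  assume j: "j < n"
  have "lip (smp n) n (1 * 1 + 1 * real m) (\<lambda>v. v j * phi pref n m i j v)"
    using j phi_bounds smp_le1 by (intro lip_mult lip_coord lip_phi) auto
  then show ?thesis unfolding hh_def[abs_def] by simp
qed

lemma lip_DD: "lip (smp n) n (\<Sum>j<n. 1 + real m) (DD pref n m i)"
  unfolding DD_def[abs_def] by (intro lip_sum lip_hh) auto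

lemma hh_bounds: "v \<in> smp n \<Longrightarrow> j < n \<Longrightarrow> 0 \<le> hh pref n m i j v \<and> hh pref n m i j v \<le> v j"
  using phi_bounds[of pref n m i j v] smp_le1[of v n j]
  by (auto simp: hh_def mult_left_le)

lemma DD_pos:
  assumes ci: "cake_instance k pref" and i: "i < k" and m: "1 \<le> m" and v: "v \<in> smp n"
  shows "0 < DD pref n m i v"
proof -
  have div: "division n (Lst n v)" using v division_Lst by blast
  then obtain j where j: "j \<in> pref i (Lst n v)" "Lst n v ! j > 0"
    using ci i unfolding cake_instance_def by blast
  have jn: "j < n" using ci i div j(1) unfolding cake_instance_def by blast
  have "v \<in> AA pref n i j" using v j(1) by (simp add: AA_def)
  then have "phi pref n m i j v = 1" by (simp add: phi_def dA_zero)
  then have hj: "hh pref n m i j v > 0" using j(2) jn by (simp add: hh_def Lst_nth)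
  have "hh pref n m i j v \<le> DD pref n m i v"
    unfolding DD_def using jn hh_bounds[OF v] by (intro member_le_sum) auto
  then show ?thesis using hj by linarith
qed

lemma smp_limit:
  assumes "\<forall>m. V m \<in> smp n" "\<forall>j<n. (\<lambda>m. V m j) \<longlonglongrightarrow> z j"
  shows "z \<in> smp n"
proof -
  have "\<forall>j<n. 0 \<le> z j"
  proof (intro allI impI)
    fix j assume j: "j < n"
    show "0 \<le> z j" by (rule LIMSEQ_le_const[OF assms(2)[rule_format, OF j]]) (use assms(1) j in \<open>auto simp: smp_def\<close>)
  qed
  moreover have "(\<lambda>m. \<Sum>j<n. V m j) \<longlonglongrightarrow> (\<Sum>j<n. z j)"
    using assms(2) by (intro tendsto_sum) auto
  then have "(\<lambda>m. 1::real) \<longlonglongrightarrow> (\<Sum>j<n. z j)" using assms(1) by (simp add: smp_def)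
  then have "(\<Sum>j<n. z j) = 1" using LIMSEQ_unique tendsto_const by blast
  ultimately show ?thesis by (simp add: smp_def)
qed

lemma lower_bound:
  fixes f :: "(nat\<Rightarrow>real) \<Rightarrow> real"
  assumes L: "lip (smp n) n K f" and pos: "\<forall>v\<in>smp n. f v > 0"
  shows "\<exists>c>0. \<forall>v\<in>smp n. c \<le> f v"
proof (rule ccontr)
  assume "\<not> ?thesis"
  then have "\<forall>m. \<exists>v. v \<in> smp n \<and> f v < inverse (real (Suc m))"
    by (metis inverse_positive_iff_positive not_le of_nat_0_less_iff zero_less_Suc)
  from choice[OF this] obtain V where V: "\<forall>m. V m \<in> smp n \<and> f (V m) < inverse (real (Suc m))" by blast
  have "\<forall>m. \<forall>j\<in>{..<n}. \<bar>V m j\<bar> \<le> 1"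
  proof (intro allI ballI)
    fix m j assume "j \<in> {..<n}"
    then show "\<bar>V m j\<bar> \<le> 1" using V smp_le1[of "V m" n j] by auto
  qed
  then obtain r z where r: "strict_mono r" "\<forall>j\<in>{..<n}. (\<lambda>m. V (r m) j) \<longlonglongrightarrow> z j"
    using bw_finite[of "{..<n}" V 1] by blast
  have z: "z \<in> smp n" using V r(2) by (intro smp_limit[of "\<lambda>m. V (r m)"]) auto
  have g0: "(\<lambda>m. inverse (real (Suc (r m))) + K * nd n z (V (r m))) \<longlonglongrightarrow> 0 + K * 0"
    using LIMSEQ_subseq_LIMSEQ[OF LIMSEQ_inverse_real_of_nat r(1)] r(2)
    by (intro tendsto_intros tendsto_nd) (auto simp: o_def)
  have "\<forall>m. f z \<le> inverse (real (Suc (r m))) + K * nd n z (V (r m))"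
  proof
    fix m
    have "\<bar>f z - f (V (r m))\<bar> \<le> K * nd n z (V (r m))" using L z V unfolding lip_def by blast
    then show "f z \<le> inverse (real (Suc (r m))) + K * nd n z (V (r m))" using V by (smt (verit))
  qed
  then have "f z \<le> 0" using LIMSEQ_le_const[OF g0[simplified]] by (metis Suc_eq_plus1_left of_nat_Suc)
  then show False using pos z by fastforce
qed

definition FF :: "(nat \<Rightarrow> real list \<Rightarrow> nat set) \<Rightarrow> nat set \<Rightarrow> nat \<Rightarrow> nat \<Rightarrow> (nat\<Rightarrow>real) \<Rightarrow> nat \<Rightarrow> real" where
  "FF pref P n m v j = (1 / real (card P)) * (\<Sum>i\<in>P. hh pref n m i j v / DD pref n m i v)"

lemma lip_abs: "lip S n K f \<Longrightarrow> lip S n \<bar>K\<bar> f"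
  by (rule lip_mono) auto

lemma stage:
  assumes ci: "cake_instance k pref" and P: "finite P" "P \<noteq> {}" "P \<subseteq> {..<k}"
    and n: "1 \<le> n" and m: "1 \<le> m"
  shows "\<exists>v\<in>smp n. \<forall>j<n. FF pref P n m v j = 1 / real n"
proof -
  have Dp: "\<And>i v. i \<in> P \<Longrightarrow> v \<in> smp n \<Longrightarrow> 0 < DD pref n m i v"
    using DD_pos[OF ci _ m] P(3) by blast
  have "\<forall>i\<in>P. \<exists>c>0. \<forall>v\<in>smp n. c \<le> DD pref n m i v"
    using lower_bound[OF lip_DD] Dp by blast
  then obtain c where c: "\<forall>i\<in>P. c i > 0 \<and> (\<forall>v\<in>smp n. c i \<le> DD pref n m i v)"
    by metis
  have cP: "real (card P) > 0" using P by (simp add: card_gt_0_iff)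
  have into: "\<forall>v\<in>smp n. FF pref P n m v \<in> smp n"
  proof
    fix v assume v: "v \<in> smp n"
    have nn: "\<forall>j<n. 0 \<le> FF pref P n m v j"
      using hh_bounds[OF v] Dp[OF _ v] cP by (auto simp: FF_def intro!: sum_nonneg divide_nonneg_pos)
    have "(\<Sum>j<n. FF pref P n m v j) = (1 / real (card P)) * (\<Sum>i\<in>P. \<Sum>j<n. hh pref n m i j v / DD pref n m i v)"
      by (simp add: FF_def sum_distrib_left[symmetric] sum_divide_distrib[symmetric] sum.swap[of _ P])
    also have "\<dots> = (1 / real (card P)) * (\<Sum>i\<in>P. 1)"
    proof -
      have "\<forall>i\<in>P. (\<Sum>j<n. hh pref n m i j v / DD pref n m i v) = 1"
        using Dp[OF _ v] by (simp add: sum_divide_distrib[symmetric] DD_def) (metis less_irrefl)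
      then show ?thesis by simp
    qed
    also have "\<dots> = 1" using cP by simp
    finally show "FF pref P n m v \<in> smp n" using nn by (simp add: smp_def)
  qed
  have face: "\<forall>v\<in>smp n. \<forall>j<n. v j = 0 \<longrightarrow> FF pref P n m v j = 0"
    by (simp add: FF_def hh_def)
  have L: "\<forall>j<n. lip (smp n) n \<bar>\<bar>1 / real (card P)\<bar> * (\<Sum>i\<in>P. (1 + real m) / c i + 1 * (\<Sum>j<n. 1 + real m) / (c i)^2)\<bar> (\<lambda>v. FF pref P n m v j)"
  proof (intro allI impI)
    fix j assume j: "j < n"
    show "lip (smp n) n \<bar>\<bar>1 / real (card P)\<bar> * (\<Sum>i\<in>P. (1 + real m) / c i + 1 * (\<Sum>j<n. 1 + real m) / (c i)^2)\<bar> (\<lambda>v. FF pref P n m v j)"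
      unfolding FF_def
    proof (intro lip_abs lip_scale lip_sum[OF P(1)])
      fix i assume i: "i \<in> P"
      have hb: "\<forall>v\<in>smp n. \<bar>hh pref n m i j v\<bar> \<le> 1"
      proof
        fix v assume v: "v \<in> smp n"
        show "\<bar>hh pref n m i j v\<bar> \<le> 1" using hh_bounds[OF v j, of pref m i] smp_le1[OF v j] by auto
      qed
      show "lip (smp n) n ((1 + real m) / c i + 1 * (\<Sum>j<n. 1 + real m) / (c i)^2) (\<lambda>v. hh pref n m i j v / DD pref n m i v)"
        using c i hb j
        by (intro lip_div[OF lip_hh lip_DD]) (auto simp: abs_le_iff intro: order_trans)
    qed
  qed
  show ?thesis using hit_bary[OF n into L abs_ge_zero face] .
qed

lemma key:
  assumes ci: "cake_instance k pref" and P: "finite P" "P \<noteq> {}" "P \<subseteq> {..<k}"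
    and n: "1 \<le> n"
  shows "\<exists>z w. z \<in> smp n \<and> (\<forall>i\<in>P. \<forall>j<n. 0 \<le> w i j) \<and> (\<forall>i\<in>P. (\<Sum>j<n. w i j) = 1)
     \<and> (\<forall>j<n. (\<Sum>i\<in>P. w i j) = real (card P) / real n)
     \<and> (\<forall>i\<in>P. \<forall>j<n. w i j > 0 \<longrightarrow> j \<in> pref i (Lst n z))"
proof -
  have "\<forall>m. \<exists>v. v \<in> smp n \<and> (\<forall>j<n. FF pref P n (Suc m) v j = 1 / real n)"
    using stage[OF ci P n] by (metis Suc_le_mono le0 One_nat_def)
  from choice[OF this] obtain V where V: "\<And>m. V m \<in> smp n" "\<And>m j. j < n \<Longrightarrow> FF pref P n (Suc m) (V m) j = 1 / real n"
    by blast
  define W where "W = (\<lambda>m i j. hh pref n (Suc m) i j (V m) / DD pref n (Suc m) i (V m))"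
  have cP: "real (card P) > 0" using P by (simp add: card_gt_0_iff)
  have Dp: "\<And>m i. i \<in> P \<Longrightarrow> 0 < DD pref n (Suc m) i (V m)"
    using DD_pos[OF ci _ _ V(1)] P(3) by auto
  have hD: "hh pref n (Suc m) i j (V m) \<le> DD pref n (Suc m) i (V m)" if "j < n" for m i j
    unfolding DD_def using that hh_bounds[OF V(1)] by (intro member_le_sum) auto
  have W0: "0 \<le> W m i j \<and> W m i j \<le> 1" if "i \<in> P" "j < n" for m i j
  proof -
    have a: "0 \<le> hh pref n (Suc m) i j (V m)" using hh_bounds[OF V(1) that(2)] by blast
    have b: "0 < DD pref n (Suc m) i (V m)" using Dp[OF that(1)] by blast
    show ?thesis using a b hD[OF that(2), of m i] by (simp add: W_def divide_le_eq_1)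
  qed
  have W1: "(\<Sum>j<n. W m i j) = 1" if "i \<in> P" for m i
    using Dp[OF that, of m] by (simp add: W_def sum_divide_distrib[symmetric] DD_def)
  have W2: "(\<Sum>i\<in>P. W m i j) = real (card P) / real n" if "j < n" for m j
  proof -
    have "(1 / real (card P)) * (\<Sum>i\<in>P. W m i j) = 1 / real n"
      using V(2)[OF that, of m] by (simp add: FF_def W_def)
    then show ?thesis using cP by (simp add: field_simps)
  qed
  have W3: "AA pref n i j \<noteq> {} \<and> real (Suc m) * dA pref n i j (V m) < 1" if "i \<in> P" "j < n" "W m i j > 0" for m i j
  proof -
    have "hh pref n (Suc m) i j (V m) \<noteq> 0" using that(3) by (auto simp: W_def)
    then have ph: "phi pref n (Suc m) i j (V m) \<noteq> 0" by (auto simp: hh_def)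
    then have lt: "real (Suc m) * dA pref n i j (V m) < 1" by (auto simp: phi_def max_def split: if_splits)
    moreover have "AA pref n i j \<noteq> {}"
    proof
      assume "AA pref n i j = {}"
      then have "dA pref n i j (V m) = 1" by (simp add: dA_def)
      then show False using lt by simp
    qed
    ultimately show ?thesis by simp
  qed
  have "\<forall>m. \<forall>j\<in>{..<n}. \<bar>V m j\<bar> \<le> 1"
  proof (intro allI ballI)
    fix m j assume "j \<in> {..<n}"
    then show "\<bar>V m j\<bar> \<le> 1" using smp_le1[OF V(1), of j m] by auto
  qed
  then obtain r1 z where r1: "strict_mono r1" "\<forall>j\<in>{..<n}. (\<lambda>m. V (r1 m) j) \<longlonglongrightarrow> z j"
    using bw_finite[of "{..<n}" V 1] by blast
  have "\<forall>m. \<forall>ij\<in>P \<times> {..<n}. \<bar>(\<lambda>m (i, j). W (r1 m) i j) m ij\<bar> \<le> 1"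
    using W0 by auto
  then obtain r2 wl where r2: "strict_mono r2" "\<forall>ij\<in>P \<times> {..<n}. (\<lambda>m. (\<lambda>m (i, j). W (r1 m) i j) (r2 m) ij) \<longlonglongrightarrow> wl ij"
    using bw_finite[of "P \<times> {..<n}" "\<lambda>m (i, j). W (r1 m) i j" 1] P(1) by blast
  define r where "r = r1 \<circ> r2"
  have r: "strict_mono r" using r1(1) r2(1) by (simp add: r_def strict_mono_o)
  have Vl: "(\<lambda>m. V (r m) j) \<longlonglongrightarrow> z j" if "j < n" for j
    using LIMSEQ_subseq_LIMSEQ[OF r1(2)[rule_format, of j] r2(1)] that by (simp add: r_def o_def)
  define w where "w = (\<lambda>i j. wl (i, j))"
  have Wl: "(\<lambda>m. W (r m) i j) \<longlonglongrightarrow> w i j" if "i \<in> P" "j < n" for i j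
    using r2(2) that by (auto simp: r_def w_def)
  have z: "z \<in> smp n" using Vl by (intro smp_limit[of "\<lambda>m. V (r m)"]) (auto simp: V(1))
  have w0: "\<forall>i\<in>P. \<forall>j<n. 0 \<le> w i j"
  proof (intro ballI allI impI)
    fix i j assume "i \<in> P" "j < n"
    then show "0 \<le> w i j" using W0 by (intro LIMSEQ_le_const[OF Wl]) auto
  qed
  have w1: "\<forall>i\<in>P. (\<Sum>j<n. w i j) = 1"
  proof
    fix i assume i: "i \<in> P"
    have "(\<lambda>m. \<Sum>j<n. W (r m) i j) \<longlonglongrightarrow> (\<Sum>j<n. w i j)" using Wl i by (intro tendsto_sum) auto
    then have "(\<lambda>m. 1::real) \<longlonglongrightarrow> (\<Sum>j<n. w i j)" using W1[OF i] by simp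
    then show "(\<Sum>j<n. w i j) = 1" using LIMSEQ_unique tendsto_const by blast
  qed
  have w2: "\<forall>j<n. (\<Sum>i\<in>P. w i j) = real (card P) / real n"
  proof (intro allI impI)
    fix j assume j: "j < n"
    have "(\<lambda>m. \<Sum>i\<in>P. W (r m) i j) \<longlonglongrightarrow> (\<Sum>i\<in>P. w i j)" using Wl j by (intro tendsto_sum) auto
    then have "(\<lambda>m. real (card P) / real n) \<longlonglongrightarrow> (\<Sum>i\<in>P. w i j)" using W2[OF j] by simp
    then show "(\<Sum>i\<in>P. w i j) = real (card P) / real n" using LIMSEQ_unique tendsto_const by blast
  qed
  have w3: "\<forall>i\<in>P. \<forall>j<n. w i j > 0 \<longrightarrow> j \<in> pref i (Lst n z)"
  proof (intro ballI allI impI)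
    fix i j assume i: "i \<in> P" and j: "j < n" and wp: "w i j > 0"
    have "eventually (\<lambda>m. 0 < W (r m) i j) sequentially" using order_tendstoD(1)[OF Wl[OF i j] wp] .
    then obtain M where M: "\<And>m. m \<ge> M \<Longrightarrow> 0 < W (r m) i j" by (auto simp: eventually_sequentially)
    have "\<forall>m. \<exists>y. y \<in> AA pref n i j \<and> nd n (V (r (m + M))) y < inverse (real (Suc m))"
    proof
      fix m
      have h: "AA pref n i j \<noteq> {}" "real (Suc (r (m + M))) * dA pref n i j (V (r (m + M))) < 1"
        using W3[OF i j M[of "m + M"]] by auto
      have "dA pref n i j (V (r (m + M))) < inverse (real (Suc (r (m + M))))"
        using h(2) by (simp add: field_simps)
      also have "\<dots> \<le> inverse (real (Suc m))"
        using seq_suble[OF r, of "m + M"] by (simp add: le_imp_inverse_le)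
      finally have "Inf ((\<lambda>y. nd n (V (r (m + M))) y) ` AA pref n i j) < inverse (real (Suc m))"
        using h(1) by (simp add: dA_def)
      then obtain x where "x \<in> (\<lambda>y. nd n (V (r (m + M))) y) ` AA pref n i j" "x < inverse (real (Suc m))"
        using cInf_lessD h(1) by (metis image_is_empty)
      then show "\<exists>y. y \<in> AA pref n i j \<and> nd n (V (r (m + M))) y < inverse (real (Suc m))" by blast
    qed
    from choice[OF this] obtain Y where Y: "\<And>m. Y m \<in> AA pref n i j"
      "\<And>m. nd n (V (r (m + M))) (Y m) < inverse (real (Suc m))" by blast
    have Ylim: "(\<lambda>m. Y m l) \<longlonglongrightarrow> z l" if l: "l < n" for l
    proof -
      have "(\<lambda>m. Y m l - V (r (m + M)) l) \<longlonglongrightarrow> 0"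
      proof (rule Lim_null_comparison[OF _ LIMSEQ_inverse_real_of_nat])
        show "\<forall>\<^sub>F m in sequentially. norm (Y m l - V (r (m + M)) l) \<le> inverse (real (Suc m))"
        proof (rule always_eventually, rule allI)
          fix m
          have "\<bar>Y m l - V (r (m + M)) l\<bar> \<le> nd n (V (r (m + M))) (Y m)"
            unfolding nd_def using l by (subst abs_minus_commute) (rule member_le_sum[of l], auto)
          then show "norm (Y m l - V (r (m + M)) l) \<le> inverse (real (Suc m))" using Y(2)[of m] by simp
        qed
      qed
      moreover have "(\<lambda>m. V (r (m + M)) l) \<longlonglongrightarrow> z l"
        using LIMSEQ_ignore_initial_segment[OF Vl[OF l], of M] .
      ultimately have "(\<lambda>m. (Y m l - V (r (m + M)) l) + V (r (m + M)) l) \<longlonglongrightarrow> 0 + z l"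
        by (rule tendsto_add)
      then show ?thesis by simp
    qed
    have i_k: "i < k" using i P(3) by blast
    have cl: "\<forall>n X x j. (\<forall>m. division n (X m)) \<longrightarrow> division n x \<longrightarrow>
        (\<forall>l<n. (\<lambda>m. X m ! l) \<longlonglongrightarrow> x ! l) \<longrightarrow> (\<forall>m. j \<in> pref i (X m)) \<longrightarrow> j \<in> pref i x"
      using ci i_k unfolding cake_instance_def by blast
    have c1: "\<forall>m. division n (Lst n (Y m))" using Y(1) by (simp add: AA_def division_Lst)
    have c2: "division n (Lst n z)" using z by (simp add: division_Lst)
    have c3: "\<forall>l<n. (\<lambda>m. Lst n (Y m) ! l) \<longlonglongrightarrow> Lst n z ! l" using Ylim by (simp add: Lst_nth)
    have c4: "\<forall>m. j \<in> pref i (Lst n (Y m))" using Y(1) by (simp add: AA_def)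
    show "j \<in> pref i (Lst n z)" using cl[rule_format, of n "\<lambda>m. Lst n (Y m)" "Lst n z" j] c1 c2 c3 c4 by blast
  qed
  show ?thesis using z w0 w1 w2 w3 by blast
qed


lemma count_lemma:
  fixes w :: "'a \<Rightarrow> 'b \<Rightarrow> real"
  assumes A: "finite A" and B: "finite B" and T: "T \<subseteq> A"
    and nn: "\<forall>a\<in>A. \<forall>b\<in>B. 0 \<le> w a b"
    and rows: "\<forall>a\<in>T. (\<Sum>b\<in>B. w a b) = \<alpha>"
    and cols: "\<forall>b\<in>B. (\<Sum>a\<in>A. w a b) \<le> \<beta>"
  shows "real (card T) * \<alpha> \<le> real (card {b\<in>B. \<exists>a\<in>T. w a b > 0}) * \<beta>"
proof -
  define NT where "NT = {b\<in>B. \<exists>a\<in>T. w a b > 0}"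
  have NTB: "NT \<subseteq> B" by (auto simp: NT_def)
  have fT: "finite T" using A T finite_subset by blast
  have "real (card T) * \<alpha> = (\<Sum>a\<in>T. \<Sum>b\<in>B. w a b)" using rows by simp
  also have "\<dots> = (\<Sum>a\<in>T. \<Sum>b\<in>NT. w a b)"
  proof (rule sum.cong[OF refl])
    fix a assume a: "a \<in> T"
    show "(\<Sum>b\<in>B. w a b) = (\<Sum>b\<in>NT. w a b)"
    proof (rule sum.mono_neutral_right[OF B NTB])
      show "\<forall>b\<in>B - NT. w a b = 0"
      proof
        fix b assume b: "b \<in> B - NT"
        then have "\<not> w a b > 0" using a by (auto simp: NT_def)
        moreover have "0 \<le> w a b" using nn a T b by auto
        ultimately show "w a b = 0" by linarith
      qed
    qed
  qed
  also have "\<dots> = (\<Sum>b\<in>NT. \<Sum>a\<in>T. w a b)" by (rule sum.swap)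
  also have "\<dots> \<le> (\<Sum>b\<in>NT. \<Sum>a\<in>A. w a b)"
    using T A nn NTB by (intro sum_mono sum_mono2) auto
  also have "\<dots> \<le> (\<Sum>b\<in>NT. \<beta>)" using cols NTB by (intro sum_mono) auto
  also have "\<dots> = real (card NT) * \<beta>" by simp
  finally show ?thesis by (simp add: NT_def)
qed

lemma int_step:
  fixes t a p k :: nat
  assumes "1 \<le> t" "1 \<le> p" "p \<le> k" "real t * real k \<le> real a * real p"
  shows "nat \<lceil>real (k - p) / real p\<rceil> + t \<le> a"
proof -
  have pp: "real p > 0" using assms(2) by simp
  have "real t * (real k - real p) \<le> (real a - real t) * real p"
    using assms(4) by (simp add: algebra_simps)
  moreover have "real k - real p \<le> real t * (real k - real p)"
    using assms(1,3) by (simp add: mult_le_cancel_right1)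
  ultimately have "real k - real p \<le> (real a - real t) * real p" by linarith
  then have "(real k - real p) / real p \<le> real a - real t" using pp by (simp add: divide_le_eq)
  then have "real (k - p) / real p \<le> real a - real t" using assms(3) by (simp add: of_nat_diff)
  moreover have "0 \<le> real (k - p) / real p" by simp
  ultimately have ta: "t \<le> a" by linarith
  have "\<lceil>real (k - p) / real p\<rceil> \<le> int a - int t" using \<open>real (k - p) / real p \<le> real a - real t\<close>
    by (simp add: ceiling_le_iff)
  then have "nat \<lceil>real (k - p) / real p\<rceil> \<le> a - t" using ta by (simp add: nat_le_iff of_nat_diff)
  then show ?thesis using ta by linarith
qed

theorem theorem2p3:
  fixes k p q :: nat and pref :: "nat \<Rightarrow> real list \<Rightarrow> nat set"
  assumes "cake_instance k pref"
    and "1 \<le> p" and "p \<le> k" and "1 \<le> q" and "q \<le> k"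
  shows "(\<forall>S. S \<subseteq> {..<k} \<and> card S = p \<longrightarrow>
            (\<exists>x. division k x \<and>
              (\<forall>R. R \<subseteq> {..<k} \<and> card R = nat \<lceil>real (k - p) / real p\<rceil> \<longrightarrow>
                 (\<exists>f. inj_on f S \<and> f ` S \<subseteq> {..<k} - R \<and> (\<forall>i\<in>S. f i \<in> pref i x)))))
       \<and> (\<exists>x. division q x \<and>
              (\<forall>L. L \<subseteq> {..<k} \<and> card L = nat \<lceil>real (k - q) / real q\<rceil> \<longrightarrow>
                 (\<exists>g. inj_on g {..<q} \<and> g ` {..<q} \<subseteq> {..<k} - L \<and>
                      (\<forall>j<q. j \<in> pref (g j) x))))"
proof (intro conjI allI impI)
  note ci = assms(1)
  have k1: "1 \<le> k" using assms by linarith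
  fix S assume S: "S \<subseteq> {..<k} \<and> card S = p"
  have fS: "finite S" using S finite_subset by blast
  have Sne: "S \<noteq> {}" using S assms(2) by auto
  obtain z w where z: "z \<in> smp k" and w0: "\<forall>i\<in>S. \<forall>j<k. 0 \<le> w i j"
    and w1: "\<forall>i\<in>S. (\<Sum>j<k. w i j) = 1"
    and w2: "\<forall>j<k. (\<Sum>i\<in>S. w i j) = real (card S) / real k"
    and w3: "\<forall>i\<in>S. \<forall>j<k. w i j > 0 \<longrightarrow> j \<in> pref i (Lst k z)"
    using key[OF ci fS Sne _ k1] S by blast
  show "\<exists>x. division k x \<and>
              (\<forall>R. R \<subseteq> {..<k} \<and> card R = nat \<lceil>real (k - p) / real p\<rceil> \<longrightarrow>
                 (\<exists>f. inj_on f S \<and> f ` S \<subseteq> {..<k} - R \<and> (\<forall>i\<in>S. f i \<in> pref i x)))"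
  proof (rule exI[of _ "Lst k z"], intro conjI allI impI)
    show "division k (Lst k z)" using z by (simp add: division_Lst)
    fix R assume R: "R \<subseteq> {..<k} \<and> card R = nat \<lceil>real (k - p) / real p\<rceil>"
    have fR: "finite R" using R finite_subset by blast
    define N where "N = (\<lambda>i. {j. j < k \<and> 0 < w i j} - R)"
    have "\<exists>f. inj_on f S \<and> (\<forall>i\<in>S. f i \<in> N i)"
    proof (rule hall[OF fS])
      show "\<forall>a\<in>S. finite (N a)" by (auto simp: N_def)
      show "\<forall>T. T \<subseteq> S \<longrightarrow> card T \<le> card (\<Union> (N ` T))"
      proof (intro allI impI)
        fix T assume T: "T \<subseteq> S"
        show "card T \<le> card (\<Union> (N ` T))"
        proof (cases "T = {}")
          case True then show ?thesis by simp
        next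
          case False
          define NT where "NT = {j\<in>{..<k}. \<exists>i\<in>T. w i j > 0}"
          have "real (card T) * 1 \<le> real (card NT) * (real p / real k)"
            unfolding NT_def
          proof (rule count_lemma[OF fS _ T])
            show "\<forall>a\<in>S. \<forall>b\<in>{..<k}. 0 \<le> w a b" using w0 by auto
            show "\<forall>a\<in>T. (\<Sum>b\<in>{..<k}. w a b) = 1" using w1 T by auto
            show "\<forall>b\<in>{..<k}. (\<Sum>a\<in>S. w a b) \<le> real p / real k" using w2 S by auto
          qed simp
          then have "real (card T) * real k \<le> real (card NT) * real p"
            using k1 by (simp add: field_simps)
          moreover have "1 \<le> card T" using False T fS finite_subset
            by (metis One_nat_def Suc_leI card_gt_0_iff)
          ultimately have ct: "nat \<lceil>real (k - p) / real p\<rceil> + card T \<le> card NT"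
            using int_step assms(2,3) by blast
          have eq: "\<Union> (N ` T) = NT - R" by (auto simp: N_def NT_def)
          have "card NT - card R \<le> card (NT - R)" using fR by (rule diff_card_le_card_Diff)
          moreover have "card R = nat \<lceil>real (k - p) / real p\<rceil>" using R by blast
          ultimately show ?thesis using ct unfolding eq by linarith
        qed
      qed
    qed
    then obtain f where f: "inj_on f S" "\<forall>i\<in>S. f i \<in> N i" by blast
    show "\<exists>f. inj_on f S \<and> f ` S \<subseteq> {..<k} - R \<and> (\<forall>i\<in>S. f i \<in> pref i (Lst k z))"
    proof (intro exI conjI)
      show "inj_on f S" by (rule f(1))
      show "f ` S \<subseteq> {..<k} - R" using f(2) by (auto simp: N_def)
      show "\<forall>i\<in>S. f i \<in> pref i (Lst k z)" using f(2) w3 by (auto simp: N_def)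
    qed
  qed
next
  note ci = assms(1)
  have k1: "1 \<le> k" using assms by linarith
  have Pne: "{..<k} \<noteq> {}" using k1 lessThan_empty_iff by (metis not_one_le_zero)
  obtain z w where z: "z \<in> smp q" and w0: "\<forall>i\<in>{..<k}. \<forall>j<q. 0 \<le> w i j"
    and w1: "\<forall>i\<in>{..<k}. (\<Sum>j<q. w i j) = 1"
    and w2: "\<forall>j<q. (\<Sum>i\<in>{..<k}. w i j) = real (card {..<k}) / real q"
    and w3: "\<forall>i\<in>{..<k}. \<forall>j<q. w i j > 0 \<longrightarrow> j \<in> pref i (Lst q z)"
    using key[OF ci finite_lessThan Pne subset_refl assms(4)] by blast
  show "\<exists>x. division q x \<and>
              (\<forall>L. L \<subseteq> {..<k} \<and> card L = nat \<lceil>real (k - q) / real q\<rceil> \<longrightarrow>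
                 (\<exists>g. inj_on g {..<q} \<and> g ` {..<q} \<subseteq> {..<k} - L \<and>
                      (\<forall>j<q. j \<in> pref (g j) x)))"
  proof (rule exI[of _ "Lst q z"], intro conjI allI impI)
    show "division q (Lst q z)" using z by (simp add: division_Lst)
    fix L assume L: "L \<subseteq> {..<k} \<and> card L = nat \<lceil>real (k - q) / real q\<rceil>"
    have fL: "finite L" using L finite_subset by blast
    define N where "N = (\<lambda>j. {i. i < k \<and> 0 < w i j} - L)"
    have "\<exists>g. inj_on g {..<q} \<and> (\<forall>j\<in>{..<q}. g j \<in> N j)"
    proof (rule hall[OF finite_lessThan])
      show "\<forall>a\<in>{..<q}. finite (N a)" by (auto simp: N_def)
      show "\<forall>T. T \<subseteq> {..<q} \<longrightarrow> card T \<le> card (\<Union> (N ` T))"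
      proof (intro allI impI)
        fix T assume T: "T \<subseteq> {..<q}"
        show "card T \<le> card (\<Union> (N ` T))"
        proof (cases "T = {}")
          case True then show ?thesis by simp
        next
          case False
          define NT where "NT = {i\<in>{..<k}. \<exists>j\<in>T. (\<lambda>j i. w i j) j i > 0}"
          have "real (card T) * (real k / real q) \<le> real (card NT) * 1"
            unfolding NT_def
          proof (rule count_lemma[OF finite_lessThan _ T])
            show "\<forall>a\<in>{..<q}. \<forall>b\<in>{..<k}. 0 \<le> w b a" using w0 by auto
            show "\<forall>a\<in>T. (\<Sum>b\<in>{..<k}. w b a) = real k / real q" using w2 T by auto
            show "\<forall>b\<in>{..<k}. (\<Sum>a\<in>{..<q}. w b a) \<le> 1" using w1 by auto
          qed simp
          then have "real (card T) * real k \<le> real (card NT) * real q"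
            using assms(4) by (simp add: field_simps)
          moreover have "1 \<le> card T" using False T finite_subset
            by (metis One_nat_def Suc_leI card_gt_0_iff finite_lessThan)
          ultimately have ct: "nat \<lceil>real (k - q) / real q\<rceil> + card T \<le> card NT"
            using int_step assms(4,5) by blast
          have eq: "\<Union> (N ` T) = NT - L" by (auto simp: N_def NT_def)
          have "card NT - card L \<le> card (NT - L)" using fL by (rule diff_card_le_card_Diff)
          moreover have "card L = nat \<lceil>real (k - q) / real q\<rceil>" using L by blast
          ultimately show ?thesis using ct unfolding eq by linarith
        qed
      qed
    qed
    then obtain g where g: "inj_on g {..<q}" "\<forall>j\<in>{..<q}. g j \<in> N j" by blast
    show "\<exists>g. inj_on g {..<q} \<and> g ` {..<q} \<subseteq> {..<k} - L \<and> (\<forall>j<q. j \<in> pref (g j) (Lst q z))"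
    proof (intro exI conjI)
      show "inj_on g {..<q}" by (rule g(1))
      show "g ` {..<q} \<subseteq> {..<k} - L" using g(2) by (auto simp: N_def)
      show "\<forall>j<q. j \<in> pref (g j) (Lst q z)" using g(2) w3 by (auto simp: N_def)
    qed
  qed
qed


end
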